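(* Let $k=\mathbb R$ or $\mathbb C$, let $(E,g)$ be a finite-dimensional inner product vector space over $k$, let $f\in\operatorname{End}_k(E)$, let $H_1,\dots,H_n$ be $f$-invariant subspaces with $E=H_1\oplus\dots\oplus H_n$, and write $f_i=f|_{H_i}$. Let $\widetilde{\mathcal H}_f^\perp=[\operatorname{Ker} f_1]_1^\perp\oplus\dots\oplus[\operatorname{Ker} f_n]_n^\perp$. Then $\widetilde{\mathcal H}_f^\perp=[\operatorname{Ker} f]^\perp$ if and only if $[\operatorname{Ker} f_i]_i^\perp\subseteq\big[\sum_{j\ne i}\operatorname{Ker} f_j\big]^\perp$ for every $i\in\{1,\dots,n\}$.
   Context: An inner product is linear in the first argument, conjugate-symmetric and positive definite. For a subspace $U\subseteq E$, $U^\perp=\{e\in E:g(u,e)=0\ \forall u\in U\}$; for a subspace $W\subseteq H_i$, $[W]_i^\perp=\{v\in H_i:g(w,v)=0\ \forall w\in W\}$. *)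

theory Defs
  imports "HOL-Analysis.Analysis"
begin

text \<open>An inner product g on the k-vector space (V, sc), k = real or complex,
  cj the conjugation of k (identity for real, cnj for complex):
  linear in the first argument, conjugate-symmetric, positive definite.\<close>
definition inner_product ::
  "('k::real_normed_field \<Rightarrow> 'v::ab_group_add \<Rightarrow> 'v) \<Rightarrow> ('k \<Rightarrow> 'k) \<Rightarrow> ('v \<Rightarrow> 'v \<Rightarrow> 'k) \<Rightarrow> bool" where
  "inner_product sc cj g \<longleftrightarrow>
     (\<forall>a u v w. g (sc a u + v) w = a * g u w + g v w) \<and>
     (\<forall>u v. g u v = cj (g v u)) \<and>
     (\<forall>v. v \<noteq> 0 \<longrightarrow> (\<exists>r::real. r > 0 \<and> g v v = of_real r))"

definition orth :: "('v \<Rightarrow> 'v \<Rightarrow> 'k::zero) \<Rightarrow> 'v set \<Rightarrow> 'v set" where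
  "orth g U = {e. \<forall>u\<in>U. g u e = 0}"

definition rel_orth :: "('v \<Rightarrow> 'v \<Rightarrow> 'k::zero) \<Rightarrow> 'v set \<Rightarrow> 'v set \<Rightarrow> 'v set" where
  "rel_orth g Hi W = {v\<in>Hi. \<forall>w\<in>W. g w v = 0}"

definition ssum :: "'i set \<Rightarrow> ('i \<Rightarrow> 'v::comm_monoid_add set) \<Rightarrow> 'v set" where
  "ssum I W = {sum w I | w. \<forall>j\<in>I. w j \<in> W j}"

definition is_direct_sum :: "('k::field \<Rightarrow> 'v::ab_group_add \<Rightarrow> 'v) \<Rightarrow> 'i set \<Rightarrow> ('i \<Rightarrow> 'v set) \<Rightarrow> bool" where
  "is_direct_sum sc I H \<longleftrightarrow>
     (\<forall>i\<in>I. module.subspace sc (H i)) \<and>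
     (\<forall>v. \<exists>!h. (\<forall>i\<in>I. h i \<in> H i) \<and> (\<forall>i. i \<notin> I \<longrightarrow> h i = 0) \<and> v = sum h I)"

end

theory Submission
  imports Defs
begin

locale ips = vector_space sc for sc :: "'k::field \<Rightarrow> 'v::ab_group_add \<Rightarrow> 'v" +
  fixes g :: "'v \<Rightarrow> 'v \<Rightarrow> 'k" and cj :: "'k \<Rightarrow> 'k"
  assumes lin1: "g (sc a u + v) w = a * g u w + g v w"
  and add2: "g u (v + w) = g u v + g u w"
  and scal2: "g u (sc a v) = cj a * g u v"
  and sym0: "g u v = 0 \<Longrightarrow> g v u = 0"
  and pos: "g v v = 0 \<Longrightarrow> v = 0"
  and cjcj: "cj (cj a) = a"
begin

lemma g_add1: "g (u + v) w = g u w + g v w"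
  using lin1[of 1 u v w] by simp

lemma g_zero1: "g 0 w = 0"
  using lin1[of "-1" u u w] by simp

lemma g_zero2: "g w 0 = 0"
  using sym0[OF g_zero1] .

lemma g_scale1: "g (sc a u) w = a * g u w"
  using lin1[of a u 0 w] by (simp add: g_zero1)

lemma g_diff1: "g (u - v) w = g u w - g v w"
  using g_add1[of "u - v" v w] by (simp add: algebra_simps)

lemma g_diff2: "g w (u - v) = g w u - g w v"
  using add2[of w "u - v" v] by (simp add: algebra_simps)

lemma g_sum1: "g (sum h A) w = (\<Sum>i\<in>A. g (h i) w)"
  by (induction A rule: infinite_finite_induct) (auto simp: g_zero1 g_add1)

lemma g_sum2: "g w (sum h A) = (\<Sum>i\<in>A. g w (h i))"
  by (induction A rule: infinite_finite_induct) (auto simp: g_zero2 add2)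

lemma span_orth:
  assumes "\<forall>s\<in>S. g s x = 0" "y \<in> span S"
  shows "g y x = 0"
  using assms(2)
proof (induction rule: span_induct)
  case step
  then show ?case using assms(1) by auto
next
  show "subspace {y. g y x = 0}"
    by (rule subspaceI) (auto simp: g_zero1 g_add1 g_scale1)
qed

lemma proj: "finite S \<Longrightarrow> \<forall>h. \<exists>k\<in>span S. \<forall>s\<in>S. g s (h - k) = 0"
proof (induction S rule: finite_induct)
  case empty
  then show ?case using span_zero by auto
next
  case (insert a S)
  show ?case
  proof
    fix h
    obtain k0 where k0: "k0 \<in> span S" "\<forall>s\<in>S. g s (h - k0) = 0" using insert.IH by blast
    obtain k1 where k1: "k1 \<in> span S" "\<forall>s\<in>S. g s (a - k1) = 0" using insert.IH by blast
    define a' where "a' = a - k1"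
    have sub: "span S \<subseteq> span (insert a S)" by (rule span_mono) auto
    have a'sp: "a' \<in> span (insert a S)" unfolding a'_def
      using span_diff[OF span_base[of a "insert a S"]] k1(1) sub by auto
    show "\<exists>k\<in>span (insert a S). \<forall>s\<in>insert a S. g s (h - k) = 0"
    proof (cases "g a' a' = 0")
      case True
      then have "a' = 0" by (rule pos)
      then have "a = k1" unfolding a'_def by simp
      then have "g a (h - k0) = 0" using span_orth[OF k0(2)] k1(1) by simp
      then show ?thesis using k0 sub by auto
    next
      case False
      define c where "c = cj (g a' (h - k0) / g a' a')"
      define k where "k = k0 + sc c a'"
      have ksp: "k \<in> span (insert a S)" unfolding k_def
        using span_add[OF _ span_scale[OF a'sp]] k0(1) sub by auto
      have eq: "h - k = (h - k0) - sc c a'" unfolding k_def by (simp add: algebra_simps)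
      have S0: "\<forall>s\<in>S. g s (h - k) = 0"
        using k0(2) k1(2) unfolding eq a'_def by (simp add: g_diff2 scal2)
      have "g a' (h - k) = 0" unfolding eq using False
        by (simp add: g_diff2 scal2 c_def cjcj)
      moreover have "g k1 (h - k) = 0" using span_orth[OF S0 k1(1)] .
      ultimately have "g a (h - k) = 0"
        using g_add1[of a' k1 "h - k"] unfolding a'_def by simp
      then show ?thesis using ksp S0 by auto
    qed
  qed
qed

lemma main:
  fixes n :: nat and H :: "nat \<Rightarrow> 'v set" and f :: "'v \<Rightarrow> 'v"
  assumes finB: "finite B" and spB: "span B = UNIV"
  and lf: "Vector_Spaces.linear sc sc f"
  and ds: "is_direct_sum sc {1..n} H"
  and inv: "\<forall>i\<in>{1..n}. f ` H i \<subseteq> H i"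
  shows "(ssum {1..n} (\<lambda>i. rel_orth g (H i) (H i \<inter> {v. f v = 0})) = orth g {v. f v = 0}
       \<longleftrightarrow> (\<forall>i\<in>{1..n}. rel_orth g (H i) (H i \<inter> {v. f v = 0})
                \<subseteq> orth g (ssum ({1..n} - {i}) (\<lambda>j. H j \<inter> {v. f v = 0}))))"
proof -
  define I where "I = {1..n}"
  define K where "K = (\<lambda>j. H j \<inter> {v. f v = 0})"
  define P where "P = (\<lambda>i. rel_orth g (H i) (K i))"
  define Kf where "Kf = {v. f v = 0}"
  have finI: "finite I" unfolding I_def by simp
  have fadd: "\<And>x y. f (x + y) = f x + f y"
    using lf unfolding Vector_Spaces.linear_iff by blast
  have fsc: "\<And>c x. f (sc c x) = sc c (f x)"
    using lf unfolding Vector_Spaces.linear_iff by blast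
  have f0: "f 0 = 0" using fadd[of 0 0] by simp
  have fsum: "f (sum h A) = (\<Sum>j\<in>A. f (h j))" for h :: "nat \<Rightarrow> 'v" and A
    by (induction A rule: infinite_finite_induct) (auto simp: f0 fadd)
  have subH: "\<And>i. i \<in> I \<Longrightarrow> subspace (H i)" using ds unfolding is_direct_sum_def I_def by auto
  have subKf: "subspace Kf" unfolding Kf_def
    by (rule subspaceI) (auto simp: f0 fadd fsc)
  have subK: "\<And>i. i \<in> I \<Longrightarrow> subspace (K i)"
    using subspace_inter[OF subH subKf] unfolding K_def Kf_def by auto
  have ex: "\<And>v. \<exists>!h. (\<forall>i\<in>I. h i \<in> H i) \<and> (\<forall>i. i \<notin> I \<longrightarrow> h i = 0) \<and> v = sum h I"
    using ds unfolding is_direct_sum_def I_def by auto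
  have ssumI: "\<And>x J W. x \<in> ssum J W \<longleftrightarrow> (\<exists>w. (\<forall>j\<in>J. w j \<in> W j) \<and> x = sum w J)"
    unfolding ssum_def by auto
  obtain B' where B': "B' \<subseteq> B" "independent B'" "B \<subseteq> span B'"
    using maximal_independent_subset[of B] by blast
  have spB': "span B' = UNIV" using B'(3) spB
    by (metis span_mono span_span top.extremum_uniqueI)
  interpret fd: finite_dimensional_vector_space sc B'
    by unfold_locales (use B' finB spB' finite_subset in auto)
  have projK: "\<And>i h. i \<in> I \<Longrightarrow> h \<in> H i \<Longrightarrow> \<exists>k\<in>K i. h - k \<in> P i"
  proof -
    fix i h assume i: "i \<in> I" and h: "h \<in> H i"
    obtain C where C: "C \<subseteq> K i" "independent C" "K i \<subseteq> span C"
      using maximal_independent_subset[of "K i"] by blast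
    have finC: "finite C" using fd.finiteI_independent[OF C(2)] .
    have spC: "span C = K i" using span_subspace[OF C(1) C(3) subK[OF i]] .
    obtain k where k: "k \<in> span C" "\<forall>s\<in>C. g s (h - k) = 0" using proj[OF finC] by blast
    have kK: "k \<in> K i" using k(1) spC by simp
    have "\<forall>w\<in>K i. g w (h - k) = 0" using span_orth[OF k(2)] spC by auto
    moreover have "h - k \<in> H i" using subspace_diff[OF subH[OF i] h] kK unfolding K_def by auto
    ultimately show "\<exists>k\<in>K i. h - k \<in> P i" using kK unfolding P_def rel_orth_def by auto
  qed
  have KfA: "Kf = ssum I K"
  proof
    show "ssum I K \<subseteq> Kf"
      unfolding Kf_def K_def by (auto simp: ssumI fsum)
  next
    show "Kf \<subseteq> ssum I K"
    proof
      fix v assume v: "v \<in> Kf"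
      obtain h where h: "\<forall>i\<in>I. h i \<in> H i" "\<forall>i. i \<notin> I \<longrightarrow> h i = 0" "v = sum h I"
        using ex[of v] by blast
      define h' where "h' = (\<lambda>i. if i \<in> I then f (h i) else 0)"
      have A: "(\<forall>i\<in>I. h' i \<in> H i) \<and> (\<forall>i. i \<notin> I \<longrightarrow> h' i = 0) \<and> 0 = sum h' I"
        using h v inv unfolding h'_def Kf_def I_def by (auto simp: fsum image_subset_iff)
      have B: "(\<forall>i\<in>I. (0::'v) \<in> H i) \<and> (\<forall>i. i \<notin> I \<longrightarrow> (0::'v) = 0) \<and> (0::'v) = (\<Sum>i\<in>I. 0)"
        using subspace_0[OF subH] by auto
      have "h' = (\<lambda>_. 0)" using ex1E[OF ex[of 0]] A B by metis
      then have "\<forall>i\<in>I. f (h i) = 0" unfolding h'_def by (metis (mono_tags))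
      then show "v \<in> ssum I K" unfolding ssumI K_def using h by auto
    qed
  qed
  have zP: "\<And>j. j \<in> I \<Longrightarrow> 0 \<in> P j"
    unfolding P_def rel_orth_def using subspace_0[OF subH] g_zero2 by auto
  have "ssum I P = orth g Kf \<longleftrightarrow> (\<forall>i\<in>I. P i \<subseteq> orth g (ssum (I - {i}) K))"
  proof
    assume eq: "ssum I P = orth g Kf"
    show "\<forall>i\<in>I. P i \<subseteq> orth g (ssum (I - {i}) K)"
    proof (intro ballI subsetI)
      fix i p assume i: "i \<in> I" and p: "p \<in> P i"
      define w where "w = (\<lambda>j. if j = i then p else 0)"
      have "p = sum w I" unfolding w_def using i finI by simp
      moreover have "\<forall>j\<in>I. w j \<in> P j" unfolding w_def using p zP by auto
      ultimately have "p \<in> ssum I P" unfolding ssumI by blast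
      then have po: "p \<in> orth g Kf" using eq by simp
      have "ssum (I - {i}) K \<subseteq> Kf"
        unfolding Kf_def K_def by (auto simp: ssumI fsum)
      then show "p \<in> orth g (ssum (I - {i}) K)" using po unfolding orth_def by auto
    qed
  next
    assume hyp: "\<forall>i\<in>I. P i \<subseteq> orth g (ssum (I - {i}) K)"
    have le: "ssum I P \<subseteq> orth g Kf"
    proof
      fix x assume "x \<in> ssum I P"
      then obtain w where w: "\<forall>j\<in>I. w j \<in> P j" "x = sum w I" unfolding ssumI by blast
      show "x \<in> orth g Kf" unfolding orth_def
      proof (intro CollectI ballI)
        fix u assume "u \<in> Kf"
        then obtain k where k: "\<forall>j\<in>I. k j \<in> K j" "u = sum k I" unfolding KfA ssumI by blast
        have "g u (w j) = 0" if j: "j \<in> I" for j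
        proof -
          have u: "u = k j + sum k (I - {j})" using k(2) sum.remove[OF finI j] by simp
          have "g (k j) (w j) = 0" using w(1) k(1) j unfolding P_def rel_orth_def by auto
          moreover have "sum k (I - {j}) \<in> ssum (I - {j}) K" unfolding ssumI using k(1) by auto
          then have "g (sum k (I - {j})) (w j) = 0" using hyp j w(1) unfolding orth_def by blast
          ultimately show ?thesis unfolding u g_add1 by simp
        qed
        then show "g u x = 0" unfolding w(2) g_sum2 by simp
      qed
    qed
    have ge: "orth g Kf \<subseteq> ssum I P"
    proof
      fix x assume x: "x \<in> orth g Kf"
      obtain h where h: "\<forall>i\<in>I. h i \<in> H i" "x = sum h I"
        using ex[of x] by blast
      have "\<forall>i\<in>I. \<exists>k. k \<in> K i \<and> h i - k \<in> P i" using projK h(1) by blast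
      then obtain kk where kk: "\<forall>i\<in>I. kk i \<in> K i \<and> h i - kk i \<in> P i" by metis
      define ks where "ks = sum kk I"
      define ps where "ps = (\<Sum>j\<in>I. h j - kk j)"
      have ksK: "ks \<in> Kf" unfolding ks_def KfA ssumI using kk by auto
      have psP: "ps \<in> ssum I P" unfolding ps_def ssumI using kk by auto
      have xeq: "x = ks + ps" unfolding ks_def ps_def h(2) sum_subtractf by simp
      have "g ks x = 0" using x ksK unfolding orth_def by auto
      moreover have "g ks ps = 0" using le psP ksK unfolding orth_def by auto
      ultimately have "g ks ks = 0" using add2[of ks ks ps] xeq by simp
      then have "ks = 0" by (rule pos)
      then show "x \<in> ssum I P" using xeq psP by simp
    qed
    show "ssum I P = orth g Kf" using le ge by auto
  qed
  then show ?thesis unfolding I_def K_def P_def Kf_def .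
qed

end

lemma ips_gen:
  fixes sc :: "'k::real_normed_field \<Rightarrow> 'v::ab_group_add \<Rightarrow> 'v"
  assumes vs: "vector_space sc" and ip: "inner_product sc cj g"
  and cjadd: "\<And>a b. cj (a + b) = cj a + cj b"
  and cjmult: "\<And>a b. cj (a * b) = cj a * cj b"
  and cjcj: "\<And>a. cj (cj a) = a"
  and cj0: "cj 0 = 0"
  shows "ips sc g cj"
proof -
  interpret vector_space sc by (rule vs)
  have lin1: "\<And>a u v w. g (sc a u + v) w = a * g u w + g v w"
    and sym: "\<And>u v. g u v = cj (g v u)"
    and ps: "\<And>v. v \<noteq> 0 \<Longrightarrow> \<exists>r::real. r > 0 \<and> g v v = of_real r"
    using ip unfolding inner_product_def by blast+
  have g1: "g (u + v) w = g u w + g v w" for u v w using lin1[of 1 u v w] by simp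
  have g0: "g 0 w = 0" for w using lin1[of "-1" w w] by simp
  have gs: "g (sc a u) w = a * g u w" for a u w using lin1[of a u 0 w] g0 by simp
  show ?thesis
  proof (unfold_locales)
    show "g (sc a u + v) w = a * g u w + g v w" for a u v w by (rule lin1)
    show "g u (v + w) = g u v + g u w" for u v w
      by (subst (1 2 3) sym) (simp add: g1 cjadd)
    show "g u (sc a v) = cj a * g u v" for u a v
      by (subst (1 2) sym) (simp add: gs cjmult)
    show "g v u = 0" if "g u v = 0" for u v
      using that sym[of v u] cj0 by simp
    show "v = 0" if "g v v = 0" for v
      using that ps[of v] by force
    show "cj (cj a) = a" for a by (rule cjcj)
  qed
qed

theorem lemma3p8:
  shows
  "(\<forall>(sc :: real \<Rightarrow> 'v::ab_group_add \<Rightarrow> 'v) (g :: 'v \<Rightarrow> 'v \<Rightarrow> real) (f :: 'v \<Rightarrow> 'v)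
       (H :: nat \<Rightarrow> 'v set) (n :: nat).
      vector_space sc \<and> (\<exists>B. finite B \<and> module.span sc B = UNIV) \<and>
      inner_product sc id g \<and> Vector_Spaces.linear sc sc f \<and>
      is_direct_sum sc {1..n} H \<and> (\<forall>i\<in>{1..n}. f ` H i \<subseteq> H i) \<longrightarrow>
      (ssum {1..n} (\<lambda>i. rel_orth g (H i) (H i \<inter> {v. f v = 0})) = orth g {v. f v = 0}
       \<longleftrightarrow> (\<forall>i\<in>{1..n}. rel_orth g (H i) (H i \<inter> {v. f v = 0})
                \<subseteq> orth g (ssum ({1..n} - {i}) (\<lambda>j. H j \<inter> {v. f v = 0})))))
   \<and>
   (\<forall>(sc :: complex \<Rightarrow> 'w::ab_group_add \<Rightarrow> 'w) (g :: 'w \<Rightarrow> 'w \<Rightarrow> complex) (f :: 'w \<Rightarrow> 'w)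
       (H :: nat \<Rightarrow> 'w set) (n :: nat).
      vector_space sc \<and> (\<exists>B. finite B \<and> module.span sc B = UNIV) \<and>
      inner_product sc cnj g \<and> Vector_Spaces.linear sc sc f \<and>
      is_direct_sum sc {1..n} H \<and> (\<forall>i\<in>{1..n}. f ` H i \<subseteq> H i) \<longrightarrow>
      (ssum {1..n} (\<lambda>i. rel_orth g (H i) (H i \<inter> {v. f v = 0})) = orth g {v. f v = 0}
       \<longleftrightarrow> (\<forall>i\<in>{1..n}. rel_orth g (H i) (H i \<inter> {v. f v = 0})
                \<subseteq> orth g (ssum ({1..n} - {i}) (\<lambda>j. H j \<inter> {v. f v = 0})))))"
proof (intro conjI allI impI)
  fix sc :: "real \<Rightarrow> 'v::ab_group_add \<Rightarrow> 'v" and g :: "'v \<Rightarrow> 'v \<Rightarrow> real"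
    and f :: "'v \<Rightarrow> 'v" and H :: "nat \<Rightarrow> 'v set" and n :: nat
  assume a: "vector_space sc \<and> (\<exists>B. finite B \<and> module.span sc B = UNIV) \<and>
      inner_product sc id g \<and> Vector_Spaces.linear sc sc f \<and>
      is_direct_sum sc {1..n} H \<and> (\<forall>i\<in>{1..n}. f ` H i \<subseteq> H i)"
  then obtain B where B: "finite B" "module.span sc B = UNIV" by blast
  have ip: "ips sc g id" by (rule ips_gen) (use a in auto)
  show "(ssum {1..n} (\<lambda>i. rel_orth g (H i) (H i \<inter> {v. f v = 0})) = orth g {v. f v = 0}
       \<longleftrightarrow> (\<forall>i\<in>{1..n}. rel_orth g (H i) (H i \<inter> {v. f v = 0})
                \<subseteq> orth g (ssum ({1..n} - {i}) (\<lambda>j. H j \<inter> {v. f v = 0}))))"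
    by (rule ips.main[OF ip B]) (use a in auto)
next
  fix sc :: "complex \<Rightarrow> 'w::ab_group_add \<Rightarrow> 'w" and g :: "'w \<Rightarrow> 'w \<Rightarrow> complex"
    and f :: "'w \<Rightarrow> 'w" and H :: "nat \<Rightarrow> 'w set" and n :: nat
  assume a: "vector_space sc \<and> (\<exists>B. finite B \<and> module.span sc B = UNIV) \<and>
      inner_product sc cnj g \<and> Vector_Spaces.linear sc sc f \<and>
      is_direct_sum sc {1..n} H \<and> (\<forall>i\<in>{1..n}. f ` H i \<subseteq> H i)"
  then obtain B where B: "finite B" "module.span sc B = UNIV" by blast
  have ip: "ips sc g cnj" by (rule ips_gen) (use a in auto)
  show "(ssum {1..n} (\<lambda>i. rel_orth g (H i) (H i \<inter> {v. f v = 0})) = orth g {v. f v = 0}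
       \<longleftrightarrow> (\<forall>i\<in>{1..n}. rel_orth g (H i) (H i \<inter> {v. f v = 0})
                \<subseteq> orth g (ssum ({1..n} - {i}) (\<lambda>j. H j \<inter> {v. f v = 0}))))"
    by (rule ips.main[OF ip B]) (use a in auto)
qed

end
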